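(* For every nonnegative integer $r$, $$\sum_{n=1}^{\infty}\frac{1}{(2n+2r+3)(n+1)(2n+1)(2n+3)}\frac{\binom{2n}{n}}{\binom{2n+2r+2}{n+r+1}}=\frac{1}{2^{2r+1}}\left(\frac{3}{8(r+1)}+\frac{4\wp(2r+2)+2\wp(2r)}{8}\right)-\frac{1}{3(2r+3)\binom{2r+2}{r+1}}-\frac{1}{2(2r+1)\binom{2r}{r}},$$ where $\wp(q)=\int_0^{\pi/2} z\sin^q z\,\mathrm{d}z$. *)

theory Defs
  imports "HOL-Analysis.Analysis"
begin

definition wp :: "nat \<Rightarrow> real" where
  "wp q = integral {0..pi/2} (\<lambda>z. z * sin z ^ q)"

end

theory Submission
  imports Defs "HOL-Real_Asymp.Real_Asymp"
begin

lemma cbin_Suc: "real ((2 * Suc k) choose Suc k) = real ((2*k) choose k) * (2 * (2 * real k + 1)) / (real k + 1)"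
proof -
  have "Suc k * ((2 * Suc k) choose Suc k) = 2 * (2 * k + 1) * ((2*k) choose k)"
    by (metis Suc_eq_plus1 Suc_times_binomial Suc_times_binomial_add
    add_2_eq_Suc add_mult_distrib mult_Suc_right nat_mult_1 one_add_one)
  then have "real (Suc k * ((2 * Suc k) choose Suc k)) = real (2 * (2 * k + 1) * ((2*k) choose k))"
    by (rule arg_cong)
  then have "real (Suc k) * real ((2 * Suc k) choose Suc k) = 2 * (2 * real k + 1) * real ((2*k) choose k)"
    by (simp only: of_nat_mult of_nat_add of_nat_numeral of_nat_1)
  then show ?thesis by (simp add: field_simps)
qed

lemma wp0: "wp 0 = pi^2/8"
proof -
  have "((\<lambda>z::real. z) has_integral ((pi/2)*(pi/2)/2 - 0*0/2)) {0..pi/2}"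
  proof (rule fundamental_theorem_of_calculus)
    fix x :: real
    have "((\<lambda>z::real. z*z/2) has_real_derivative x) (at x)"
      by (auto intro!: derivative_eq_intros)
    then show "((\<lambda>z::real. z*z/2) has_vector_derivative x) (at x within {0..pi/2})"
      by (simp add: has_real_derivative_iff_has_vector_derivative has_vector_derivative_at_within)
  qed simp
  then show ?thesis unfolding wp_def by (simp add: integral_unique power2_eq_square)
qed
lemma wp_alg: fixes x s c a :: real and q :: nat
  assumes "c * c = 1 - s * s" "a = s ^ q"
  shows "- (s * a * c) - x * (real (Suc q) * a * c * c) + x * (s * a * s) + s * a * c
     = x * ((real q + 2) * (s * s * a) - (real q + 1) * a)"
proof -
  have "x * (real (Suc q) * a * c * c) = x * (real (Suc q) * a * (1 - s * s))"
    by (metis assms(1) mult.assoc)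
  then show ?thesis by (simp add: algebra_simps)
qed

lemma wp_rec: "(real q + 2) * wp (Suc (Suc q)) = (real q + 1) * wp q + 1 / (real q + 2)"
proof -
  define F where "F z = - z * sin z ^ (Suc q) * cos z + sin z ^ (Suc (Suc q)) / (real q + 2)" for z
  have "((\<lambda>z. z * ((real q + 2) * sin z ^ (Suc (Suc q)) - (real q + 1) * sin z ^ q)) has_integral (F (pi/2) - F 0)) {0..pi/2}"
  proof (rule fundamental_theorem_of_calculus)
    show "0 \<le> pi/2" by simp
    fix x assume "x \<in> {0..pi/2}"
    have d1: "((\<lambda>z. sin z ^ Suc q) has_real_derivative (real (Suc q) * (cos x * sin x ^ q))) (at x)"
      using DERIV_power[OF DERIV_sin[of x], of "Suc q"] by simp
    have d2: "((\<lambda>z. sin z ^ Suc (Suc q)) has_real_derivative (real (Suc (Suc q)) * (cos x * sin x ^ Suc q))) (at x)"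
      using DERIV_power[OF DERIV_sin[of x], of "Suc (Suc q)"] by simp
    have d3: "((\<lambda>z. - z * sin z ^ (Suc q)) has_real_derivative (- 1 * sin x ^ Suc q + (real (Suc q) * (cos x * sin x ^ q)) * (- x))) (at x)"
      by (rule DERIV_mult[OF DERIV_minus[OF DERIV_ident] d1])
    have d4: "((\<lambda>z. - z * sin z ^ (Suc q) * cos z) has_real_derivative ((- 1 * sin x ^ Suc q + (real (Suc q) * (cos x * sin x ^ q)) * (- x)) * cos x + (- sin x) * (- x * sin x ^ Suc q))) (at x)"
      by (rule DERIV_mult[OF d3 DERIV_cos])
    have d5: "((\<lambda>z. sin z ^ (Suc (Suc q)) / (real q + 2)) has_real_derivative (real (Suc (Suc q)) * (cos x * sin x ^ Suc q)) / (real q + 2)) (at x)"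
      by (rule DERIV_cdivide[OF d2])
    have "(F has_real_derivative ((- 1 * sin x ^ Suc q + (real (Suc q) * (cos x * sin x ^ q)) * (- x)) * cos x + (- sin x) * (- x * sin x ^ Suc q)) + (real (Suc (Suc q)) * (cos x * sin x ^ Suc q)) / (real q + 2)) (at x)"
      unfolding F_def by (rule DERIV_add[OF d4 d5])
    moreover have "((- 1 * sin x ^ Suc q + (real (Suc q) * (cos x * sin x ^ q)) * (- x)) * cos x + (- sin x) * (- x * sin x ^ Suc q)) + (real (Suc (Suc q)) * (cos x * sin x ^ Suc q)) / (real q + 2)
       = x * ((real q + 2) * sin x ^ (Suc (Suc q)) - (real q + 1) * sin x ^ q)"
    proof -
      have cc: "cos x * cos x = 1 - sin x * sin x" using sin_squared_eq[of x] by (simp add: power2_eq_square)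
      have e: "(real (Suc (Suc q)) * (cos x * sin x ^ Suc q)) / (real q + 2) = sin x * sin x ^ q * cos x"
        by (simp add: field_simps)
      have "((- 1 * sin x ^ Suc q + (real (Suc q) * (cos x * sin x ^ q)) * (- x)) * cos x + (- sin x) * (- x * sin x ^ Suc q)) + (real (Suc (Suc q)) * (cos x * sin x ^ Suc q)) / (real q + 2)
          = - (sin x * sin x ^ q * cos x) - x * (real (Suc q) * sin x ^ q * cos x * cos x) + x * (sin x * sin x ^ q * sin x) + sin x * sin x ^ q * cos x"
        unfolding e by (simp add: algebra_simps)
      also have "\<dots> = x * ((real q + 2) * (sin x * sin x * sin x ^ q) - (real q + 1) * sin x ^ q)"
        by (rule wp_alg[OF cc refl])
      also have "\<dots> = x * ((real q + 2) * sin x ^ (Suc (Suc q)) - (real q + 1) * sin x ^ q)"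
        by (simp add: algebra_simps)
      finally show ?thesis .
    qed
    ultimately have "(F has_real_derivative (x * ((real q + 2) * sin x ^ (Suc (Suc q)) - (real q + 1) * sin x ^ q))) (at x)"
      by simp
    then show "(F has_vector_derivative (x * ((real q + 2) * sin x ^ (Suc (Suc q)) - (real q + 1) * sin x ^ q))) (at x within {0..pi/2})"
      by (simp add: has_real_derivative_iff_has_vector_derivative has_vector_derivative_at_within)
  qed
  moreover have "F (pi/2) - F 0 = 1 / (real q + 2)" by (simp add: F_def)
  ultimately have I: "((\<lambda>z. z * ((real q + 2) * sin z ^ (Suc (Suc q)) - (real q + 1) * sin z ^ q)) has_integral 1 / (real q + 2)) {0..pi/2}" by simp
  have i1: "((\<lambda>z. z * sin z ^ (Suc (Suc q))) has_integral wp (Suc (Suc q))) {0..pi/2}"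
    unfolding wp_def by (rule integrable_integral) (auto intro!: integrable_continuous_interval continuous_intros)
  have i2: "((\<lambda>z. z * sin z ^ q) has_integral wp q) {0..pi/2}"
    unfolding wp_def by (rule integrable_integral) (auto intro!: integrable_continuous_interval continuous_intros)
  have "((\<lambda>z. (real q + 2) * (z * sin z ^ (Suc (Suc q))) - (real q + 1) * (z * sin z ^ q)) has_integral ((real q + 2) * wp (Suc (Suc q)) - (real q + 1) * wp q)) {0..pi/2}"
    by (intro has_integral_diff has_integral_mult_right i1 i2)
  moreover have "(\<lambda>z. (real q + 2) * (z * sin z ^ (Suc (Suc q))) - (real q + 1) * (z * sin z ^ q)) = (\<lambda>z. z * ((real q + 2) * sin z ^ (Suc (Suc q)) - (real q + 1) * sin z ^ q))"
    by (auto simp: algebra_simps)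
  ultimately have J: "((\<lambda>z. z * ((real q + 2) * sin z ^ (Suc (Suc q)) - (real q + 1) * sin z ^ q)) has_integral ((real q + 2) * wp (Suc (Suc q)) - (real q + 1) * wp q)) {0..pi/2}"
    by simp
  have "(real q + 2) * wp (Suc (Suc q)) - (real q + 1) * wp q = 1 / (real q + 2)"
    by (rule has_integral_unique[OF J I])
  then show ?thesis by (simp add: algebra_simps)
qed

lemma odd_basel: "(\<lambda>n. 1 / (2 * real n + 1)^2) sums (pi^2/8)"
proof -
  have e: "(\<lambda>n. 1 / (2 * real n + 2)^2) sums (pi^2/24)"
  proof -
    have "(\<lambda>n. (1/4) * (1 / (real n + 1)^2)) sums ((1/4) * (pi^2/6))"
      using sums_mult[OF inverse_squares_sums, of "1/4"] by (simp add: add.commute)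
    moreover have "(\<lambda>n. (1/4) * (1 / (real n + 1)^2)) = (\<lambda>n. 1 / (2 * real n + 2)^2)"
      by (auto simp: field_simps power2_eq_square)
    ultimately show ?thesis by simp
  qed
  have "(\<lambda>n. sum (\<lambda>k. 1 / (real k + 1)^2) {n*2..<n*2+2}) sums (pi^2/6)"
    using sums_group[OF inverse_squares_sums, of 2] by (simp add: add.commute)
  moreover have "(\<lambda>n. sum (\<lambda>k. 1 / (real k + 1)^2) {n*2..<n*2+2}) = (\<lambda>n. 1 / (2 * real n + 1)^2 + 1 / (2 * real n + 2)^2)"
  proof
    fix n
    have "{n*2..<n*2+2} = {2*n, 2*n+1::nat}" by auto
    then show "sum (\<lambda>k. 1 / (real k + 1)^2) {n*2..<n*2+2} = 1 / (2 * real n + 1)^2 + 1 / (2 * real n + 2)^2"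
      by (simp add: add.commute add.left_commute)
  qed
  ultimately have "(\<lambda>n. 1 / (2 * real n + 1)^2 + 1 / (2 * real n + 2)^2) sums (pi^2/6)" by simp
  from sums_diff[OF this e] show ?thesis by simp
qed

lemma t2': fixes r :: nat shows "(\<lambda>m::nat. ((8*(real m+1)^2+4*(real r+3)*(real m+1)-(real r+2)*(real r-1))/(8*((real r+1)*(real r+2)^2*(3*real r+2)))) / ((2*(real m+1)+2*real r+3)*(2*(real m+1)+1))) \<longlonglongrightarrow> inverse (real r + 1) * inverse ((real r + 2)^2) * inverse (3 * real r + 2) / 4"
  by real_asymp

lemma t2: fixes r :: nat shows "(\<lambda>m::nat. ((8*(real m+1)^2+4*(real r+3)*(real m+1)-(real r+2)*(real r-1))/(8*((real r+1)*(real r+2)^2*(3*real r+2)))) / ((2*(real m+1)+2*real r+3)*(2*(real m+1)+1))) \<longlonglongrightarrow> 1/(4*((real r+1)*(real r+2)^2*(3*real r+2)))"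
proof -
  have "inverse (real r + 1) * inverse ((real r + 2)^2) * inverse (3 * real r + 2) / 4 = 1/(4*((real r+1)*(real r+2)^2*(3*real r+2)))"
    by (simp add: field_simps)
  then show ?thesis using t2'[of r] by (simp only:)
qed

definition al :: "real \<Rightarrow> real" where "al y = (2*y+1)*(3*y+5)/(8*(y+2)*(3*y+2))"
definition Dr :: "real \<Rightarrow> real" where "Dr y = (y+1)*(y+2)^2*(3*y+2)"
definition Xf :: "real \<Rightarrow> real \<Rightarrow> real" where "Xf y x = (8*x^2+4*(y+3)*x-(y+2)*(y-1))/(8*Dr y)"

lemma step_core:
  fixes x y :: real
  assumes "x \<ge> 0" "y \<ge> 0"
  shows "1/((2*x+2*y+7)*(x+2)*(2*x+3)*(2*x+5))*(x+y+3)/(2*(2*x+2*y+5)) = al y/((2*x+2*y+5)*(x+2)*(2*x+3)*(2*x+5)) + Xf y (x+2)/((2*x+2*y+7)*(2*x+5))*(2*(2*x+3)/(x+2))*(x+y+3)/(2*(2*x+2*y+5)) - Xf y (x+1)/((2*x+2*y+5)*(2*x+3))"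
proof -
  have p: "x+2 > 0" "2*x+2*y+7 > 0" "2*x+3>0" "2*x+5>0" "2*x+2*y+5>0" "y+2>0" "3*y+2>0" "y+1>0" using assms by auto
  have q: "x+2 \<noteq> 0" "2*x+2*y+7 \<noteq> 0" "2*x+3\<noteq>0" "2*x+5\<noteq>0" "2*x+2*y+5\<noteq>0" "y+2\<noteq>0" "3*y+2\<noteq>0" "y+1\<noteq>0" using p by auto
  show ?thesis unfolding al_def Xf_def Dr_def power2_eq_square
    using assms apply (simp add: divide_simps q)
    apply algebra
    done
qed

lemma final_alg:
  fixes y w c p W2 W4 C1 C2 :: real
  assumes y: "y \<ge> 0" and c: "c > 0" and p: "p > 0"
  and W2: "W2 = ((2*y+1)*w + 1/(2*y+2))/(2*y+2)"
  and W4: "W4 = ((2*y+3)*W2 + 1/(2*y+4))/(2*y+4)"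
  and C1: "C1 = c*(2*(2*y+1))/(y+1)"
  and C2: "C2 = C1*(2*(2*y+3))/(y+2)"
  shows "1/(8*p)*(3/(8*(y+2)) + (4*W4+2*W2)/8) - 1/(3*(2*y+5)*C2) - 1/(2*(2*y+3)*C1)
    = al y * (1/(2*p)*(3/(8*(y+1)) + (4*W2+2*w)/8) - 1/(3*(2*y+3)*C1) - 1/(2*(2*y+1)*c))
      + (1/(4*Dr y*(4*p)) - Xf y 1/((2+2*y+3)*3) * (2/C2))"
proof -
  have q: "2*y+2 \<noteq> 0" "2*y+4 \<noteq> 0" "y+1 \<noteq> 0" "y+2\<noteq>0" "2*y+1\<noteq>0" "2*y+3\<noteq>0" "2*y+5\<noteq>0" "3*y+2\<noteq>0" "c \<noteq> 0" "p \<noteq> 0"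
    using y c p by auto
  show ?thesis unfolding W4 W2 C2 C1 al_def Xf_def Dr_def power2_eq_square
    using y c p apply (simp add: divide_simps q)
    apply algebra
    done
qed

definition cb :: "nat \<Rightarrow> real" where "cb k = real ((2*k) choose k)"

lemma cb_pos: "cb k > 0" unfolding cb_def by simp

lemma cb_Suc: "cb (Suc k) = cb k * (2 * (2 * real k + 1)) / (real k + 1)"
  unfolding cb_def by (rule cbin_Suc)

lemma t1: "(\<lambda>m::nat. (real (m+1+k)+1)/(2*(2*real (m+1+k)+1))) \<longlonglongrightarrow> 1/4"
  by real_asymp

lemma ratio_lim: "(\<lambda>m. cb (m+1) / cb (m+1+k)) \<longlonglongrightarrow> 1/4^k"
proof (induction k)
  case 0
  then show ?case using cb_pos by (simp add: less_imp_neq[symmetric])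
next
  case (Suc k)
  have "(\<lambda>m. cb (m+1) / cb (m+1+k) * ((real (m+1+k)+1)/(2*(2*real (m+1+k)+1)))) \<longlonglongrightarrow> 1/4^k * (1/4)"
    by (rule tendsto_mult[OF Suc t1])
  moreover have "cb (m+1) / cb (m+1+k) * ((real (m+1+k)+1)/(2*(2*real (m+1+k)+1))) = cb (m+1) / cb (m+1+Suc k)" for m
  proof -
    have eq: "cb (m+1+Suc k) = cb (m+1+k) * (2 * (2 * real (m+1+k) + 1)) / (real (m+1+k) + 1)"
      using cb_Suc[of "m+1+k"] by simp
    have pos: "cb (m+1+k) > 0" "cb (m+1) > 0" by (rule cb_pos)+
    show ?thesis unfolding eq using pos by (simp add: field_simps)
  qed
  ultimately show ?case by (simp add: field_simps)
qed

definition Hf :: "nat \<Rightarrow> nat \<Rightarrow> real" where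
  "Hf r m = Xf (real r) (real m + 1) / ((2*(real m+1)+2*real r+3)*(2*(real m+1)+1)) * (cb (m+1) / cb (m+r+2))"

definition Lf :: "nat \<Rightarrow> real" where "Lf r = 1/(4*Dr (real r)*(4*4^r))"

lemma Hf_lim: "Hf r \<longlonglongrightarrow> Lf r"
proof -
  have a: "(\<lambda>m::nat. Xf (real r) (real m + 1) / ((2*(real m+1)+2*real r+3)*(2*(real m+1)+1))) \<longlonglongrightarrow> 1/(4*Dr (real r))"
    using t2[of r] unfolding Xf_def Dr_def .
  have "(\<lambda>m. Xf (real r) (real m + 1) / ((2*(real m+1)+2*real r+3)*(2*(real m+1)+1)) * (cb (m+1) / cb (m+1+(r+1)))) \<longlonglongrightarrow> 1/(4*Dr (real r)) * (1/4^(r+1))"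
    by (rule tendsto_mult[OF a ratio_lim])
  moreover have "1/(4*Dr (real r)) * (1/4^(r+1)) = Lf r" unfolding Lf_def by simp
  moreover have "(\<lambda>m. Xf (real r) (real m + 1) / ((2*(real m+1)+2*real r+3)*(2*(real m+1)+1)) * (cb (m+1) / cb (m+1+(r+1)))) = Hf r"
    unfolding Hf_def by (simp add: add.assoc)
  ultimately show ?thesis by simp
qed

definition T :: "nat \<Rightarrow> nat \<Rightarrow> real" where
  "T r = (\<lambda>m. let n = Suc m in
            1 / ((2 * real n + 2 * real r + 3) * (real n + 1) * (2 * real n + 1) * (2 * real n + 3))
            * (real ((2*n) choose n) / real ((2*n + 2*r + 2) choose (n + r + 1))))"

definition RHS :: "nat \<Rightarrow> real" where
  "RHS r = (1 / 2 ^ (2*r + 1) * (3 / (8 * (real r + 1)) + (4 * wp (2*r + 2) + 2 * wp (2*r)) / 8)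
           - 1 / (3 * (2 * real r + 3) * real ((2*r + 2) choose (r + 1)))
           - 1 / (2 * (2 * real r + 1) * real ((2*r) choose r)))"

lemma T_eq: "T r m = 1/((2*real m+2*real r+5)*(real m+2)*(2*real m+3)*(2*real m+5)) * (cb (m+1)/cb (m+r+2))"
proof -
  have e1: "2 * Suc m + 2 * r + 2 = 2 * (m+r+2)" "Suc m + r + 1 = m+r+2" by simp_all
  have e2: "real ((2 * Suc m) choose Suc m) = cb (m+1)" unfolding cb_def by simp
  have e3: "real ((2 * (m+r+2)) choose (m+r+2)) = cb (m+r+2)" unfolding cb_def by simp
  show ?thesis unfolding T_def Let_def e1 e2 e3
    by (simp add: algebra_simps)
qed

lemma step_alg:
  fixes x y a b :: real
  assumes "x \<ge> 0" "y \<ge> 0" "a > 0" "b > 0"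
  shows "1/((2*x+2*(y+1)+5)*(x+2)*(2*x+3)*(2*x+5)) * (a/(b*(2*(2*(x+y+2)+1))/(x+y+3)))
     = al y * (1/((2*x+2*y+5)*(x+2)*(2*x+3)*(2*x+5)) * (a/b))
       + (Xf y (x+2) / ((2*(x+2)+2*y+3)*(2*(x+2)+1)) * ((a*(2*(2*(x+1)+1))/(x+2)) / (b*(2*(2*(x+y+2)+1))/(x+y+3)))
          - Xf y (x+1) / ((2*(x+1)+2*y+3)*(2*(x+1)+1)) * (a/b))"
proof -
  have q: "x+2 \<noteq> 0" "2*x+2*y+7 \<noteq> 0" "2*x+3\<noteq>0" "2*x+5\<noteq>0" "2*x+2*y+5\<noteq>0" "y+2\<noteq>0" "3*y+2\<noteq>0" "y+1\<noteq>0"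
     "a \<noteq> 0" "b \<noteq> 0" "x+y+3 \<noteq> 0" "2*(2*(x+y+2)+1) \<noteq> 0" using assms by auto
  show ?thesis unfolding al_def Xf_def Dr_def power2_eq_square
    using assms apply (simp add: divide_simps q)
    apply algebra
    done
qed

lemma step: "T (Suc r) m = al (real r) * T r m + (Hf r (Suc m) - Hf r m)"
proof -
  define x where "x = real m"
  define y where "y = real r"
  have ca: "cb (m+2) = cb (m+1) * (2*(2*(x+1)+1))/(x+2)"
    using cb_Suc[of "m+1"] unfolding x_def by (simp add: algebra_simps)
  have "cb (m+r+3) = cb (Suc (m+r+2))" by (rule arg_cong[of _ _ cb]) simp
  also have "\<dots> = cb (m+r+2) * (2*(2*(x+y+2)+1))/(x+y+3)"
    using cb_Suc[of "m+r+2"] unfolding x_def y_def by (simp add: algebra_simps)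
  finally have cbb: "cb (m+r+3) = cb (m+r+2) * (2*(2*(x+y+2)+1))/(x+y+3)" .
  have "T (Suc r) m = 1/((2*x+2*(y+1)+5)*(x+2)*(2*x+3)*(2*x+5)) * (cb (m+1)/cb (m+r+3))"
    unfolding T_eq x_def y_def by (simp add: add_ac eval_nat_numeral)
  then have L: "T (Suc r) m = 1/((2*x+2*(y+1)+5)*(x+2)*(2*x+3)*(2*x+5)) * (cb (m+1)/(cb (m+r+2)*(2*(2*(x+y+2)+1))/(x+y+3)))"
    unfolding cbb .
  have R1: "T r m = 1/((2*x+2*y+5)*(x+2)*(2*x+3)*(2*x+5)) * (cb (m+1)/cb (m+r+2))"
    unfolding T_eq x_def y_def by simp
  have "Hf r (Suc m) = Xf y (x+2) / ((2*(x+2)+2*y+3)*(2*(x+2)+1)) * (cb (m+2) / cb (m+r+3))"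
    unfolding Hf_def x_def y_def by (simp add: add_ac eval_nat_numeral)
  then have R2: "Hf r (Suc m) = Xf y (x+2) / ((2*(x+2)+2*y+3)*(2*(x+2)+1)) * ((cb (m+1)*(2*(2*(x+1)+1))/(x+2)) / (cb (m+r+2)*(2*(2*(x+y+2)+1))/(x+y+3)))"
    unfolding ca cbb .
  have R3: "Hf r m = Xf y (x+1) / ((2*(x+1)+2*y+3)*(2*(x+1)+1)) * (cb (m+1)/cb (m+r+2))"
    unfolding Hf_def x_def y_def by simp
  show ?thesis unfolding L R1 R2 R3 y_def[symmetric]
    by (rule step_alg) (auto simp: x_def y_def cb_pos)
qed

lemma RHS_Suc: "RHS (Suc r) = al (real r) * RHS r + (Lf r - Hf r 0)"
proof -
  define y where "y = real r"
  define w where "w = wp (2*r)"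
  define c where "c = cb r"
  define p where "p = (4::real)^r"
  define W2 where "W2 = wp (2*r+2)"
  define W4 where "W4 = wp (2*r+4)"
  define C1 where "C1 = cb (r+1)"
  define C2 where "C2 = cb (r+2)"
  have p2: "(2::real)^(2*r) = p" unfolding p_def by (simp add: power_mult)
  have pa: "(2::real)^(2*Suc r+1) = 8*p" using p2 by (simp add: power_add algebra_simps)
  have pb: "(2::real)^(2*r+1) = 2*p" using p2 by (simp add: power_add algebra_simps)
  have b1: "real ((2*Suc r + 2) choose (Suc r + 1)) = C2"
  proof -
    have "2*Suc r + 2 = 2*(r+2)" "Suc r + 1 = r+2" by simp_all
    then show ?thesis unfolding C2_def cb_def by simp
  qed
  have b2: "real ((2*Suc r) choose (Suc r)) = C1" unfolding C1_def cb_def by simp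
  have b3: "real ((2*r + 2) choose (r + 1)) = C1"
  proof -
    have "2*r + 2 = 2*(r+1)" by simp
    then show ?thesis unfolding C1_def cb_def by simp
  qed
  have b4: "real ((2*r) choose r) = c" unfolding c_def cb_def ..
  have i1: "wp (2*Suc r + 2) = W4" unfolding W4_def by (simp add: algebra_simps eval_nat_numeral)
  have i2: "wp (2*Suc r) = W2" unfolding W2_def by simp
  have LHS: "RHS (Suc r) = 1/(8*p)*(3/(8*(y+2)) + (4*W4+2*W2)/8) - 1/(3*(2*y+5)*C2) - 1/(2*(2*y+3)*C1)"
    unfolding RHS_def pa b1 b2 i1 i2 y_def by (simp add: algebra_simps)
  have R0: "RHS r = 1/(2*p)*(3/(8*(y+1)) + (4*W2+2*w)/8) - 1/(3*(2*y+3)*C1) - 1/(2*(2*y+1)*c)"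
    unfolding RHS_def pb b3 b4 y_def W2_def w_def by simp
  have H0: "Hf r 0 = Xf y 1/((2+2*y+3)*3) * (2/C2)"
  proof -
    have "cb 1 = 2" unfolding cb_def by simp
    then show ?thesis unfolding Hf_def C2_def y_def by (simp add: algebra_simps)
  qed
  have L0: "Lf r = 1/(4*Dr y*(4*p))" unfolding Lf_def y_def p_def ..
  have W2e: "W2 = ((2*y+1)*w + 1/(2*y+2))/(2*y+2)"
  proof -
    have "(real (2*r) + 2) * wp (Suc (Suc (2*r))) = (real (2*r) + 1) * wp (2*r) + 1 / (real (2*r) + 2)"
      by (rule wp_rec)
    then have e: "(2*y+2) * W2 = (2*y+1)*w + 1/(2*y+2)" unfolding W2_def w_def y_def by simp
    have "2*y+2 \<noteq> 0" unfolding y_def by simp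
    then have "W2 = ((2*y+2) * W2)/(2*y+2)" by simp
    then show ?thesis unfolding e .
  qed
  have W4e: "W4 = ((2*y+3)*W2 + 1/(2*y+4))/(2*y+4)"
  proof -
    have "(real (2*r+2) + 2) * wp (Suc (Suc (2*r+2))) = (real (2*r+2) + 1) * wp (2*r+2) + 1 / (real (2*r+2) + 2)"
      by (rule wp_rec)
    then have "(2*y+4) * W4 = (2*y+3)*W2 + 1/(2*y+4)" unfolding W2_def W4_def y_def
      by (simp add: algebra_simps eval_nat_numeral)
    then have e: "(2*y+4) * W4 = (2*y+3)*W2 + 1/(2*y+4)" .
    have "2*y+4 \<noteq> 0" unfolding y_def by simp
    then have "W4 = ((2*y+4) * W4)/(2*y+4)" by simp
    then show ?thesis unfolding e .
  qed
  have C1e: "C1 = c*(2*(2*y+1))/(y+1)" unfolding C1_def c_def y_def using cb_Suc[of r] by simp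
  have C2e: "C2 = C1*(2*(2*y+3))/(y+2)" unfolding C1_def C2_def y_def using cb_Suc[of "r+1"]
    by (simp add: algebra_simps eval_nat_numeral)
  show ?thesis unfolding LHS R0 H0 L0 y_def[symmetric]
    by (rule final_alg[OF _ _ _ W2e W4e C1e C2e]) (auto simp: y_def c_def p_def cb_pos)
qed

lemma pf: fixes x a :: real assumes "x \<ge> 0" "a > 0"
  shows "1/((2*x+5)*(x+2)*(2*x+3)*(2*x+5)) * (a/(a * (2*(2*(x+1)+1))/(x+2))) = (1/8) * (1/(2*(x+1)+1)^2 + 1/(2*(x+2)+1)^2) + (1/8) * (1/(2*(x+1)+3) - 1/(2*x+3))"
proof -
  have q: "a \<noteq> 0" "x+2 \<noteq> 0" "2*x+3 \<noteq> 0" "2*x+5 \<noteq> 0" "2*(x+1)+1 \<noteq> 0" "2*(x+2)+1 \<noteq> 0" "2*(x+1)+3 \<noteq> 0"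
    using assms by auto
  show ?thesis unfolding power2_eq_square using assms
    apply (simp add: divide_simps q)
    apply algebra
    done
qed

lemma g_lim: "(\<lambda>n::nat. 1 / (2 * real n + 3)) \<longlonglongrightarrow> 0"
  by real_asymp

lemma base: "T 0 sums RHS 0"
proof -
  define f where "f n = 1 / (2 * real n + 1)^2" for n :: nat
  define g where "g n = 1 / (2 * real n + 3)" for n :: nat
  have fs: "f sums (pi^2/8)" unfolding f_def by (rule odd_basel)
  have s1: "(\<lambda>m. f (Suc m)) sums (pi^2/8 - 1)"
    using fs by (subst sums_Suc_iff) (simp add: f_def)
  have s2: "(\<lambda>m. f (Suc (Suc m))) sums (pi^2/8 - 1 - 1/9)"
    using s1 by (subst sums_Suc_iff[where f="\<lambda>m. f (Suc m)"]) (simp add: f_def)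
  have s3: "(\<lambda>m. g (Suc m) - g m) sums (0 - g 0)"
    by (rule telescope_sums) (simp add: g_def g_lim)
  have S: "(\<lambda>m. (1/8) * (f (Suc m) + f (Suc (Suc m))) + (1/8) * (g (Suc m) - g m)) sums
      ((1/8) * ((pi^2/8 - 1) + (pi^2/8 - 1 - 1/9)) + (1/8) * (0 - g 0))"
    by (intro sums_add sums_mult s1 s2 s3)
  have T0: "T 0 m = (1/8) * (f (Suc m) + f (Suc (Suc m))) + (1/8) * (g (Suc m) - g m)" for m
  proof -
    define x where "x = real m"
    have "cb (m+2) = cb (m+1) * (2*(2*(x+1)+1))/(x+2)"
      using cb_Suc[of "m+1"] unfolding x_def by (simp add: algebra_simps)
    then have "T 0 m = 1/((2*x+5)*(x+2)*(2*x+3)*(2*x+5)) * (cb (m+1)/(cb (m+1) * (2*(2*(x+1)+1))/(x+2)))"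
      unfolding T_eq x_def by simp
    also have "\<dots> = (1/8) * (1/(2*(x+1)+1)^2 + 1/(2*(x+2)+1)^2) + (1/8) * (1/(2*(x+1)+3) - 1/(2*x+3))"
    proof -
      have "x \<ge> 0" unfolding x_def by simp
      then show ?thesis using pf[of x "cb (m+1)"] cb_pos[of "m+1"] by simp
    qed
    also have "\<dots> = (1/8) * (f (Suc m) + f (Suc (Suc m))) + (1/8) * (g (Suc m) - g m)"
      unfolding f_def g_def x_def by (simp add: algebra_simps)
    finally show ?thesis .
  qed
  have R: "RHS 0 = (1/8) * ((pi^2/8 - 1) + (pi^2/8 - 1 - 1/9)) + (1/8) * (0 - g 0)"
  proof -
    have "(real 0 + 2) * wp (Suc (Suc 0)) = (real 0 + 1) * wp 0 + 1 / (real 0 + 2)" by (rule wp_rec)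
    then have w2: "wp 2 = pi^2/16 + 1/4" using wp0 by (simp add: numeral_2_eq_2 field_simps)
    show ?thesis unfolding RHS_def g_def using w2 wp0 by (simp add: field_simps numeral_2_eq_2)
  qed
  show ?thesis using S unfolding T0[abs_def, symmetric] R by (simp add: fun_eq_iff)
qed

theorem theorem5p0p4:
  fixes r :: nat
  shows "(\<lambda>m. let n = Suc m in
            1 / ((2 * real n + 2 * real r + 3) * (real n + 1) * (2 * real n + 1) * (2 * real n + 3))
            * (real ((2*n) choose n) / real ((2*n + 2*r + 2) choose (n + r + 1))))
         sums
          (1 / 2 ^ (2*r + 1) * (3 / (8 * (real r + 1)) + (4 * wp (2*r + 2) + 2 * wp (2*r)) / 8)
           - 1 / (3 * (2 * real r + 3) * real ((2*r + 2) choose (r + 1)))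
           - 1 / (2 * (2 * real r + 1) * real ((2*r) choose r)))"
proof -
  have "T r sums RHS r"
  proof (induction r)
    case 0
    then show ?case by (rule base)
  next
    case (Suc r)
    have "(\<lambda>m. al (real r) * T r m + (Hf r (Suc m) - Hf r m)) sums (al (real r) * RHS r + (Lf r - Hf r 0))"
      by (intro sums_add sums_mult Suc telescope_sums Hf_lim)
    then show ?case unfolding step[symmetric] RHS_Suc[symmetric] by (simp add: fun_eq_iff)
  qed
  then show ?thesis unfolding T_def RHS_def .
qed

end
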